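(* Let $n,\lambda,\mu$ be positive integers with $\mu>\lambda$, and let $\mathcal{A}$ be a strong path decomposition of $\lambda K_n$. Then $\lambda K_n$ is strongly $2$-extendible with respect to $(\mathcal{A},\mu K_n)$ if and only if (B1) $2|\mathcal{S}_0(\mathcal{A})|+|\mathcal{S}_1(\mathcal{A})|\le(\mu-\lambda)\frac{n(n-1)}{2}$, and (B2) for every pair of distinct vertices $u,v$, $|\mathcal{S}_0(\mathcal{A})|+|\mathcal{S}_1(u,v,\mathcal{A})|\le(\mu-\lambda)\left(\frac{n(n-1)}{2}-1\right)$.
   Context: Graphs may have multiple edges. $\lambda K_n$ is the loopless multigraph on $n$ vertices with every pair of distinct vertices joined by exactly $\lambda$ edges; $\lambda K_n$ is regarded as a subgraph of $\mu K_n$ on the same vertex set, and $\mu K_n\setminus\lambda K_n$ denotes the graph obtained by deleting the edges of $\lambda K_n$. A decomposition of size $k$ of a graph $G$ is an ordered $k$-tuple $(G(1),\dots,G(k))$ of spanning subgraphs of $G$ (colour classes; possibly edgeless) with pairwise disjoint edge sets whose union is $E(G)$. A path decomposition is one in which every colour class is a vertex-disjoint union of paths and cycles (two parallel edges form a cycle of length 2); it is strong if no colour class contains a cycle. $\mathcal{S}_i(\mathcal{A})$ is the set of colour classes of $\mathcal{A}$ with exactly $i$ edges, and $\mathcal{S}_1(u,v,\mathcal{A})$ is the set of those in $\mathcal{S}_1(\mathcal{A})$ whose single edge joins $u$ and $v$. For a graph $G\subseteq H$, a strong path decomposition $\mathcal{A}$ of $G$ with $k$ colour classes and a positive integer $\alpha$,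 $G$ is strongly $\alpha$-extendible with respect to $(\mathcal{A},H)$ if there is a graph $F\subseteq H\setminus G$ and a strong path decomposition $\mathcal{A}^*$ of $G\cup F$ of size $k$ whose restriction to $G$ is $\mathcal{A}$ and each $\mathcal{A}^*(i)$ has at least $\alpha$ edges. *)

theory Defs
  imports Main "HOL-Library.Multiset"
begin

(* Vertices are natural numbers; the vertex set of K_n is {0..<n}.
   An edge is an unordered pair {u,v} (u ~= v), a multigraph is a multiset of edges. *)

definition pairs :: "nat \<Rightarrow> nat set set" where
  "pairs n = {e. \<exists>u v. u < v \<and> v < n \<and> e = {u, v}}"

definition complete_multi :: "nat \<Rightarrow> nat \<Rightarrow> nat set multiset" where
  "complete_multi lam n = (\<Sum>e\<in>pairs n. replicate_mset lam e)"

definition has_cycle :: "nat set set \<Rightarrow> bool" where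
  "has_cycle E \<longleftrightarrow> (\<exists>vs. length vs \<ge> 3 \<and> distinct vs \<and>
      (\<forall>i < length vs. {vs ! i, vs ! ((i + 1) mod length vs)} \<in> E))"

(* A colour class of a strong path decomposition: a vertex-disjoint union of paths,
   no cycles (in particular no two parallel edges, hence it is a set of edges). *)
definition linear_forest :: "nat set set \<Rightarrow> bool" where
  "linear_forest E \<longleftrightarrow> finite E \<and> (\<forall>e\<in>E. \<exists>u v. u \<noteq> v \<and> e = {u, v}) \<and>
     (\<forall>v. card {e\<in>E. v \<in> e} \<le> 2) \<and> \<not> has_cycle E"

definition strong_path_decomp :: "nat \<Rightarrow> (nat \<Rightarrow> nat set set) \<Rightarrow> nat set multiset \<Rightarrow> bool" where
  "strong_path_decomp k A G \<longleftrightarrow> (\<forall>i<k. linear_forest (A i)) \<and> (\<Sum>i<k. mset_set (A i)) = G"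

definition strongly_extendible ::
  "nat \<Rightarrow> nat set multiset \<Rightarrow> nat \<Rightarrow> (nat \<Rightarrow> nat set set) \<Rightarrow> nat set multiset \<Rightarrow> bool" where
  "strongly_extendible alpha G k A H \<longleftrightarrow>
     (\<exists>F A'. F \<subseteq># H - G \<and> strong_path_decomp k A' (G + F) \<and>
        (\<forall>i<k. A i \<subseteq> A' i \<and> card (A' i) \<ge> alpha))"

definition S :: "nat \<Rightarrow> nat \<Rightarrow> (nat \<Rightarrow> nat set set) \<Rightarrow> nat set" where
  "S j k A = {i. i < k \<and> card (A i) = j}"

definition S1uv :: "nat \<Rightarrow> nat \<Rightarrow> nat \<Rightarrow> (nat \<Rightarrow> nat set set) \<Rightarrow> nat set" where
  "S1uv u v k A = {i. i < k \<and> A i = {{u, v}}}"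

end

theory Submission
  imports Defs
begin


lemma size_sum_set: "size (\<Sum>i\<in>A. (M i :: 'a multiset)) = (\<Sum>i\<in>A. size (M i))"
  by (induct A rule: infinite_finite_induct) simp_all
lemma filter_sum_set: "filter_mset P (\<Sum>i\<in>A. (M i :: 'a multiset)) = (\<Sum>i\<in>A. filter_mset P (M i))"
  by (induct A rule: infinite_finite_induct) simp_all

lemma count2: "a \<noteq> b \<Longrightarrow> count M a + count M b \<le> size M"
proof -
  assume ab: "a \<noteq> b"
  have "replicate_mset (count M a) a + replicate_mset (count M b) b \<subseteq># M"
    using ab by (auto simp: subseteq_mset_def)
  from size_mset_mono[OF this] show ?thesis by simp
qed

lemma count3: "a \<noteq> b \<Longrightarrow> a \<noteq> c \<Longrightarrow> b \<noteq> c \<Longrightarrow> count M a + count M b + count M c \<le> size M"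
proof -
  assume ab: "a \<noteq> b" "a \<noteq> c" "b \<noteq> c"
  have "replicate_mset (count M a) a + replicate_mset (count M b) b + replicate_mset (count M c) c \<subseteq># M"
    using ab by (auto simp: subseteq_mset_def)
  from size_mset_mono[OF this] show ?thesis by simp
qed

lemma card2: "finite I \<Longrightarrow> a \<noteq> b \<Longrightarrow> card {i\<in>I. f i = a} + card {i\<in>I. f i = b} \<le> card I"
proof -
  assume fi: "finite I" and ab: "a \<noteq> b"
  have "card {i\<in>I. f i = a} + card {i\<in>I. f i = b} = card ({i\<in>I. f i = a} \<union> {i\<in>I. f i = b})"
    using fi ab by (subst card_Un_disjoint) auto
  also have "\<dots> \<le> card I" using fi by (intro card_mono) auto
  finally show ?thesis .
qed

lemma exists_other: "count M r < size M \<Longrightarrow> \<exists>q. q \<in># M \<and> q \<noteq> r"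
proof (rule ccontr)
  assume a: "count M r < size M" and b: "\<not> (\<exists>q. q \<in># M \<and> q \<noteq> r)"
  have "count M x = count (replicate_mset (count M r) r) x" for x
    using b by (cases "x = r") (auto simp: count_eq_zero_iff)
  then have "M = replicate_mset (count M r) r"
    by (rule multiset_eqI)
  then have "size M = count M r" by (metis size_replicate_mset)
  then show False using a by simp
qed

lemma alloc1:
  fixes Sup :: "'a multiset" and I :: "nat set" and f :: "nat \<Rightarrow> 'a"
  assumes "finite I" "card I \<le> size Sup"
   "\<forall>p. count Sup p + card {i\<in>I. f i = p} \<le> size Sup"
  shows "\<exists>g. (\<forall>i\<in>I. g i \<noteq> f i) \<and> (\<Sum>i\<in>I. {#g i#}) \<subseteq># Sup"
  using assms
proof (induction "card I" arbitrary: I Sup)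
  case 0
  then show ?case by auto
next
  case (Suc N)
  define s where "s p = card {i\<in>I. f i = p}" for p
  define val where "val p = count Sup p + s p" for p
  define R where "R = set_mset Sup \<union> f ` I"
  have Ine: "I \<noteq> {}" using Suc.hyps(2) by auto
  have finR: "finite R" "R \<noteq> {}" using Suc.prems(1) Ine by (auto simp: R_def)
  obtain r where rR: "r \<in> R" and rmax0: "\<forall>p\<in>R. val p \<le> val r"
  proof -
    have "Max (val ` R) \<in> val ` R" using finR by (intro Max_in) auto
    then obtain r where "r \<in> R" "val r = Max (val ` R)" by auto
    moreover have "\<forall>p\<in>R. val p \<le> Max (val ` R)" using finR by auto
    ultimately show ?thesis using that by auto
  qed
  have "val p = 0" if "p \<notin> R" for p
  proof -
    have e: "{i\<in>I. f i = p} = {}" using that by (auto simp: R_def)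
    have "s p = 0" by (simp only: s_def e card.empty)
    moreover have "p \<notin># Sup" using that by (auto simp: R_def)
    ultimately show ?thesis by (simp add: val_def count_eq_zero_iff)
  qed
  then have rmax: "val p \<le> val r" for p using rmax0 by (cases "p \<in> R") auto
  have inv: "val p \<le> size Sup" for p using Suc.prems(3) by (simp add: val_def s_def)
  have sI: "s a + s b \<le> Suc N" if "a \<noteq> b" for a b
    using card2[OF Suc.prems(1) that, of f] Suc.hyps(2) by (simp add: s_def)
  have NC: "Suc N \<le> size Sup" using Suc by simp
  have cardrem: "card {i\<in>I - {i0}. f i = p} = (if f i0 = p then s p - 1 else s p)" if "i0 \<in> I" for i0 p
  proof -
    have "{i\<in>I - {i0}. f i = p} = {i\<in>I. f i = p} - {i0}" by auto
    then show ?thesis using that Suc.prems(1) by (simp add: card_Diff_singleton_if s_def)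
  qed
  have cnt: "count (Sup - {#q#}) p = count Sup p - (if p = q then 1 else 0)" for q p by auto
  obtain i0 q where i0: "i0 \<in> I" and q: "q \<in># Sup" and fq: "f i0 \<noteq> q"
    and newinv: "\<forall>p. count (Sup - {#q#}) p + card {i\<in>I - {i0}. f i = p} \<le> size Sup - 1"
  proof (cases "s r > 0")
    case True
    then obtain i0 where i0: "i0 \<in> I" "f i0 = r"
      by (auto simp: s_def card_gt_0_iff)
    have "count Sup r < size Sup" using inv[of r] True by (simp add: val_def)
    from exists_other[OF this] obtain q where q: "q \<in># Sup" "q \<noteq> r"
      by blast
    have "count (Sup - {#q#}) p + card {i\<in>I - {i0}. f i = p} \<le> size Sup - 1" for p
    proof -
      have cq: "0 < count Sup q" using q by simp
      consider "p = r" | "p = q" | "p \<noteq> r" "p \<noteq> q" by blast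
      then show ?thesis
      proof cases
        case 1 then show ?thesis using inv[of r] True q cardrem[OF i0(1), of p] i0
          by (auto simp: val_def)
      next
        case 2 then show ?thesis using inv[of q] cq q cardrem[OF i0(1), of p] i0
          by (auto simp: val_def)
      next
        case 3
        have a: "count Sup r + count Sup p + count Sup q \<le> size Sup" using count3[of r p q Sup] 3 q by auto
        have b: "s r + s p \<le> Suc N" using sI[of r p] 3 by auto
        have c: "val p \<le> val r" by (rule rmax)
        have "val p \<le> size Sup - 1" using a b c NC cq inv[of r] unfolding val_def by linarith
        then show ?thesis using 3 cardrem[OF i0(1), of p] i0 by (auto simp: val_def)
      qed
    qed
    then show ?thesis using that[OF i0(1) q(1)] i0 q by auto
  next
    case False
    then have sr: "s r = 0" by simp
    obtain i0 where i0: "i0 \<in> I" using Ine by auto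
    have fr: "f i0 \<noteq> r" using sr i0 Suc.prems(1) by (auto simp: s_def)
    have sf: "s (f i0) \<ge> 1" using i0 Suc.prems(1) by (auto simp: s_def Suc_le_eq card_gt_0_iff)
    have cr: "count Sup r \<ge> 1" using rmax[of "f i0"] sr sf unfolding val_def by linarith
    then have q: "r \<in># Sup" by (simp add: Suc_le_eq)
    have "count (Sup - {#r#}) p + card {i\<in>I - {i0}. f i = p} \<le> size Sup - 1" for p
    proof -
      consider "p = r" | "p = f i0" | "p \<noteq> r" "p \<noteq> f i0" by blast
      then show ?thesis
      proof cases
        case 1 then show ?thesis using inv[of r] cr cardrem[OF i0(1), of p] fr
          by (auto simp: val_def)
      next
        case 2 then show ?thesis using inv[of p] sf cardrem[OF i0(1), of p] fr
          by (auto simp: val_def)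
      next
        case 3
        have a: "count Sup r + count Sup p \<le> size Sup" using count2[of r p Sup] 3 by auto
        have b: "s p + s (f i0) \<le> Suc N" using sI[of p "f i0"] 3 by auto
        have c: "val p \<le> val r" by (rule rmax)
        have "val p \<le> size Sup - 1" using a b c NC sf sr inv[of r] unfolding val_def by linarith
        then show ?thesis using 3 cardrem[OF i0(1), of p] by (auto simp: val_def)
      qed
    qed
    then show ?thesis using that[OF i0 q] fr by auto
  qed
  have "\<exists>g. (\<forall>i\<in>I - {i0}. g i \<noteq> f i) \<and> (\<Sum>i\<in>I - {i0}. {#g i#}) \<subseteq># Sup - {#q#}"
  proof (rule Suc.hyps(1))
    show "N = card (I - {i0})" using Suc.hyps(2) i0 Suc.prems(1) by simp
    show "finite (I - {i0})" using Suc.prems(1) by simp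
    show "card (I - {i0}) \<le> size (Sup - {#q#})"
      using Suc.hyps(2) i0 Suc.prems(1) NC q by (simp add: size_Diff_singleton)
    show "\<forall>p. count (Sup - {#q#}) p + card {i \<in> I - {i0}. f i = p} \<le> size (Sup - {#q#})"
      using newinv q by (simp add: size_Diff_singleton)
  qed
  then obtain g where g: "\<forall>i\<in>I - {i0}. g i \<noteq> f i" "(\<Sum>i\<in>I - {i0}. {#g i#}) \<subseteq># Sup - {#q#}"
    by blast
  define g' where "g' = g(i0 := q)"
  have "(\<Sum>i\<in>I. {#g' i#}) = {#g' i0#} + (\<Sum>i\<in>I - {i0}. {#g' i#})"
    using Suc.prems(1) i0 by (simp add: sum.remove)
  also have "(\<Sum>i\<in>I - {i0}. {#g' i#}) = (\<Sum>i\<in>I - {i0}. {#g i#})"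
    by (rule sum.cong) (auto simp: g'_def)
  finally have "(\<Sum>i\<in>I. {#g' i#}) = add_mset q (\<Sum>i\<in>I - {i0}. {#g i#})" by (simp add: g'_def)
  then have "(\<Sum>i\<in>I. {#g' i#}) \<subseteq># Sup" using g(2) q by (simp add: insert_subset_eq_iff)
  moreover have "\<forall>i\<in>I. g' i \<noteq> f i" using g(1) fq by (auto simp: g'_def)
  ultimately show ?case by blast
qed

lemma alloc2:
  fixes Sup :: "'a multiset" and f :: "nat \<Rightarrow> 'a"
  assumes "finite I0" "finite I1" "I0 \<inter> I1 = {}"
    "2 * card I0 + card I1 \<le> size Sup"
    "\<forall>p. count Sup p + card I0 + card {i\<in>I1. f i = p} \<le> size Sup"
  shows "\<exists>B. (\<forall>i\<in>I0. card (B i) = 2) \<and> (\<forall>i\<in>I1. \<exists>x. B i = {x} \<and> x \<noteq> f i)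
     \<and> (\<Sum>i\<in>I0 \<union> I1. mset_set (B i)) \<subseteq># Sup"
  using assms
proof (induction "card I0" arbitrary: I0 I1 Sup f)
  case 0
  then have I0: "I0 = {}" by simp
  have "\<forall>p. count Sup p + card {i\<in>I1. f i = p} \<le> size Sup" using 0 by simp
  then obtain g where g: "\<forall>i\<in>I1. g i \<noteq> f i" "(\<Sum>i\<in>I1. {#g i#}) \<subseteq># Sup"
    using alloc1[of I1 Sup f] 0 by auto
  have "(\<Sum>i\<in>I0 \<union> I1. mset_set {g i}) = (\<Sum>i\<in>I1. {#g i#})" using I0 by simp
  then show ?case using g I0 by (intro exI[of _ "\<lambda>i. {g i}"]) auto
next
  case (Suc N)
  obtain i0 where i0: "i0 \<in> I0" using Suc.hyps(2) by (metis card.empty ex_in_conv nat.distinct(1))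
  have sz: "2 \<le> size Sup" using Suc.hyps(2) Suc.prems(4) by simp
  then have "Sup \<noteq> {#}" by auto
  then obtain p where p: "p \<in># Sup" by (metis multiset_nonemptyE)
  define I0' where "I0' = I0 - {i0}"
  define I1' where "I1' = insert i0 I1"
  define f' where "f' = f(i0 := p)"
  have i0n: "i0 \<notin> I1" using i0 Suc.prems(3) by auto
  have cI0': "card I0' = N" using Suc.hyps(2) i0 Suc.prems(1) by (simp add: I0'_def)
  have cI1': "card I1' = Suc (card I1)" using i0n Suc.prems(2) by (simp add: I1'_def)
  have sp: "size (Sup - {#p#}) = size Sup - 1" using p by (simp add: size_Diff_singleton)
  have cset: "card {i\<in>I1'. f' i = q} = card {i\<in>I1. f i = q} + (if q = p then 1 else 0)" for q
  proof -
    have e1: "{i\<in>I1. f' i = q} = {i\<in>I1. f i = q}" using i0n by (auto simp: f'_def)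
    show ?thesis
    proof (cases "q = p")
      case True
      then have "{i\<in>I1'. f' i = q} = insert i0 {i\<in>I1. f' i = q}" by (auto simp: I1'_def f'_def)
      then show ?thesis using True e1 i0n Suc.prems(2) by simp
    next
      case False
      then have "{i\<in>I1'. f' i = q} = {i\<in>I1. f' i = q}" by (auto simp: I1'_def f'_def)
      then show ?thesis using False e1 by simp
    qed
  qed
  have "\<exists>B. (\<forall>i\<in>I0'. card (B i) = 2) \<and> (\<forall>i\<in>I1'. \<exists>x. B i = {x} \<and> x \<noteq> f' i)
     \<and> (\<Sum>i\<in>I0' \<union> I1'. mset_set (B i)) \<subseteq># Sup - {#p#}"
  proof (rule Suc.hyps(1))
    show "N = card I0'" using cI0' by simp
    show "finite I0'" "finite I1'" "I0' \<inter> I1' = {}"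
      using Suc.prems(1,2,3) by (auto simp: I0'_def I1'_def)
    show "2 * card I0' + card I1' \<le> size (Sup - {#p#})"
      using cI0' cI1' sp Suc.hyps(2) Suc.prems(4) by simp
    show "\<forall>q. count (Sup - {#p#}) q + card I0' + card {i \<in> I1'. f' i = q} \<le> size (Sup - {#p#})"
    proof
      fix q
      have h: "count Sup q + Suc N + card {i\<in>I1. f i = q} \<le> size Sup"
        using Suc.prems(5) Suc.hyps(2) by metis
      have cp: "0 < count Sup p" using p by simp
      show "count (Sup - {#p#}) q + card I0' + card {i \<in> I1'. f' i = q} \<le> size (Sup - {#p#})"
      proof (cases "q = p")
        case True
        have c1: "count (Sup - {#p#}) q = count Sup q - 1" using True by simp
        have c2: "card {i\<in>I1'. f' i = q} = card {i\<in>I1. f i = q} + 1" using cset[of q] True by simp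
        have cq: "0 < count Sup q" using cp True by simp
        show ?thesis using h cq cI0' sp c1 c2 by linarith
      next
        case False
        then show ?thesis using h cI0' sp cset[of q] by simp
      qed
    qed
  qed
  then obtain B where B: "\<forall>i\<in>I0'. card (B i) = 2" "\<forall>i\<in>I1'. \<exists>x. B i = {x} \<and> x \<noteq> f' i"
     "(\<Sum>i\<in>I0' \<union> I1'. mset_set (B i)) \<subseteq># Sup - {#p#}" by blast
  obtain x where x: "B i0 = {x}" "x \<noteq> p" using B(2) by (auto simp: I1'_def f'_def)
  define B' where "B' = B(i0 := {p, x})"
  have U: "I0' \<union> I1' = I0 \<union> I1" using i0 by (auto simp: I0'_def I1'_def)
  have fin: "finite (I0 \<union> I1)" using Suc.prems(1,2) by simp
  have i0U: "i0 \<in> I0 \<union> I1" using i0 by simp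
  have "(\<Sum>i\<in>I0 \<union> I1. mset_set (B' i)) = mset_set (B' i0) + (\<Sum>i\<in>I0 \<union> I1 - {i0}. mset_set (B' i))"
    using fin i0U by (simp add: sum.remove)
  also have "(\<Sum>i\<in>I0 \<union> I1 - {i0}. mset_set (B' i)) = (\<Sum>i\<in>I0 \<union> I1 - {i0}. mset_set (B i))"
    by (rule sum.cong) (auto simp: B'_def)
  also have "mset_set (B' i0) = add_mset p (mset_set (B i0))" using x by (simp add: B'_def)
  finally have "(\<Sum>i\<in>I0 \<union> I1. mset_set (B' i)) = add_mset p (mset_set (B i0) + (\<Sum>i\<in>I0 \<union> I1 - {i0}. mset_set (B i)))"
    by simp
  also have "mset_set (B i0) + (\<Sum>i\<in>I0 \<union> I1 - {i0}. mset_set (B i)) = (\<Sum>i\<in>I0 \<union> I1. mset_set (B i))"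
    using fin i0U by (simp add: sum.remove)
  finally have sumeq: "(\<Sum>i\<in>I0 \<union> I1. mset_set (B' i)) = add_mset p (\<Sum>i\<in>I0 \<union> I1. mset_set (B i))" .
  have "(\<Sum>i\<in>I0 \<union> I1. mset_set (B' i)) \<subseteq># Sup"
    unfolding sumeq using B(3) U p by (simp add: insert_subset_eq_iff)
  moreover have "\<forall>i\<in>I0. card (B' i) = 2"
    using B(1) x by (auto simp: B'_def I0'_def)
  moreover have "\<forall>i\<in>I1. \<exists>x. B' i = {x} \<and> x \<noteq> f i"
    using B(2) i0n by (auto simp: B'_def I1'_def f'_def)
  ultimately show ?case by blast
qed



lemma pairs_alt: "pairs n = {e. e \<subseteq> {..<n} \<and> card e = 2}"
proof
  show "pairs n \<subseteq> {e. e \<subseteq> {..<n} \<and> card e = 2}"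
    by (auto simp: pairs_def)
  show "{e. e \<subseteq> {..<n} \<and> card e = 2} \<subseteq> pairs n"
  proof
    fix e assume "e \<in> {e. e \<subseteq> {..<n} \<and> card e = 2}"
    then have s: "e \<subseteq> {..<n}" and c: "card e = 2" by auto
    from c obtain x y where xy: "e = {x, y}" "x \<noteq> y" by (auto simp: card_2_iff)
    show "e \<in> pairs n"
    proof (cases "x < y")
      case True then show ?thesis using xy s unfolding pairs_def by blast
    next
      case False then have "y < x" using xy by simp
      then show ?thesis using xy s unfolding pairs_def by (auto simp: insert_commute)
    qed
  qed
qed

lemma finite_pairs: "finite (pairs n)"
  unfolding pairs_alt by (rule finite_subset[of _ "Pow {..<n}"]) auto

lemma card_pairs: "card (pairs n) = n * (n - 1) div 2"
  unfolding pairs_alt using n_subsets[of "{..<n}" 2] by (simp add: choose_two)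

lemma pairs_mem: "u < n \<Longrightarrow> v < n \<Longrightarrow> u \<noteq> v \<Longrightarrow> {u, v} \<in> pairs n"
proof (cases "u < v")
  case True
  assume "u < n" "v < n"
  then show ?thesis using True unfolding pairs_def by blast
next
  case False
  assume "u < n" "v < n" "u \<noteq> v"
  then have "v < u" "{u, v} = {v, u}" using False by (auto simp: insert_commute)
  then show ?thesis using \<open>u < n\<close> unfolding pairs_def by blast
qed

lemma pairs_edge: "e \<in> pairs n \<Longrightarrow> \<exists>u v. u \<noteq> v \<and> e = {u, v}"
  unfolding pairs_def by (blast dest: less_imp_neq)

lemma count_complete: "count (complete_multi l n) e = (if e \<in> pairs n then l else 0)"
proof -
  have "count (complete_multi l n) e = (\<Sum>e'\<in>pairs n. if e' = e then l else 0)"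
    unfolding complete_multi_def count_sum by (intro sum.cong) auto
  also have "\<dots> = (if e \<in> pairs n then l else 0)"
    using finite_pairs by (simp add: sum.delta')
  finally show ?thesis .
qed

lemma size_complete: "size (complete_multi l n) = l * card (pairs n)"
proof -
  have "size (complete_multi l n) = (\<Sum>e\<in>pairs n. size (replicate_mset l e))"
    unfolding complete_multi_def by (induct "pairs n" rule: infinite_finite_induct) simp_all
  then show ?thesis by simp
qed

lemma diff_complete: "complete_multi mu n - complete_multi lam n = complete_multi (mu - lam) n"
  by (rule multiset_eqI) (simp add: count_complete)

lemma has_cycle_card: assumes "has_cycle E" "finite E" shows "card E \<ge> 3"
proof -
  from assms obtain vs where l: "length vs \<ge> 3" and d: "distinct vs"
    and e: "\<forall>i < length vs. {vs ! i, vs ! ((i + 1) mod length vs)} \<in> E"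
    unfolding has_cycle_def by blast
  define L where "L = length vs"
  have e0: "{vs!0, vs!1} \<in> E" proof -
    have "vs \<noteq> []" "length vs \<noteq> Suc 0" using l by auto
    then show ?thesis using e[rule_format, of 0] by (simp add: L_def)
  qed
  have e1: "{vs!1, vs!2} \<in> E" using e[rule_format, of 1] l by (simp add: numeral_2_eq_2)
  have e2: "{vs!2, vs!((3::nat) mod L)} \<in> E" using e[rule_format, of 2] l by (simp add: L_def)
  have nth_ne: "vs ! i \<noteq> vs ! j" if "i < L" "j < L" "i \<noteq> j" for i j
    using d that by (simp add: L_def nth_eq_iff_index_eq)
  have m3: "(3::nat) mod L < L" "(3::nat) mod L \<noteq> 1" "(3::nat) mod L \<noteq> 2"
  proof -
    have "L \<ge> 3" using l by (simp add: L_def)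
    then have "(3::nat) mod L = 0 \<or> ((3::nat) mod L = 3 \<and> 3 < L)"
      by (cases "L = 3") auto
    then show "(3::nat) mod L < L" "(3::nat) mod L \<noteq> 1" "(3::nat) mod L \<noteq> 2"
      using \<open>L \<ge> 3\<close> by auto
  qed
  have l3: "0 < L" "1 < L" "2 < L" using l by (auto simp: L_def)
  have a: "{vs!0, vs!1} \<noteq> {vs!1, vs!2}"
    using nth_ne[of 0 2] nth_ne[of 0 1] l3 by (auto simp: doubleton_eq_iff)
  have b: "{vs!0, vs!1} \<noteq> {vs!2, vs!((3::nat) mod L)}"
    using nth_ne[of 2 0] nth_ne[of 2 1] l3 by (auto simp: doubleton_eq_iff)
  have c: "{vs!1, vs!2} \<noteq> {vs!2, vs!((3::nat) mod L)}"
    using nth_ne[of 1 2] nth_ne[of 1 "3 mod L"] l3 m3 by (auto simp: doubleton_eq_iff)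
  have "{{vs!0, vs!1}, {vs!1, vs!2}, {vs!2, vs!((3::nat) mod L)}} \<subseteq> E" using e0 e1 e2 by auto
  from card_mono[OF assms(2) this] a b c show ?thesis by simp
qed

lemma linear_forest_small:
  assumes "finite E" "card E \<le> 2" "\<forall>e\<in>E. \<exists>u v. u \<noteq> v \<and> e = {u, v}"
  shows "linear_forest E"
  unfolding linear_forest_def
proof (intro conjI allI)
  fix v show "card {e\<in>E. v \<in> e} \<le> 2"
    using card_mono[OF assms(1), of "{e\<in>E. v \<in> e}"] assms(2) by auto
  show "\<not> has_cycle E" using has_cycle_card[of E] assms by fastforce
qed (use assms in auto)



lemma decomp_facts:
  assumes "strong_path_decomp k A (complete_multi lam n)" "i < k"
  shows "finite (A i)" "A i \<subseteq> pairs n"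
proof -
  have lf: "linear_forest (A i)" using assms unfolding strong_path_decomp_def by auto
  then show fin: "finite (A i)" unfolding linear_forest_def by auto
  show "A i \<subseteq> pairs n"
  proof
    fix e assume e: "e \<in> A i"
    have "count (mset_set (A i)) e \<le> (\<Sum>j<k. count (mset_set (A j)) e)"
      using assms(2) by (intro member_le_sum) auto
    also have "\<dots> = count (complete_multi lam n) e"
      using assms(1) unfolding strong_path_decomp_def by (metis count_sum)
    finally have "count (complete_multi lam n) e > 0" using e fin by simp
    then show "e \<in> pairs n" by (simp add: count_complete split: if_splits)
  qed
qed

lemma split_decomp:
  assumes "\<forall>i<k. finite (A' i)" "\<forall>i<k. A i \<subseteq> A' i"
  shows "(\<Sum>i<k. mset_set (A' i)) = (\<Sum>i<k. mset_set (A i)) + (\<Sum>i<k. mset_set (A' i - A i))"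
proof -
  have "mset_set (A' i) = mset_set (A i) + mset_set (A' i - A i)" if "i < k" for i
  proof -
    have "A' i = A i \<union> (A' i - A i)" using assms that by auto
    then have "mset_set (A' i) = mset_set (A i \<union> (A' i - A i))" by simp
    also have "\<dots> = mset_set (A i) + mset_set (A' i - A i)"
      using assms that by (intro mset_set_Union) (auto intro: finite_subset)
    finally show ?thesis .
  qed
  then have "(\<Sum>i<k. mset_set (A' i)) = (\<Sum>i<k. mset_set (A i) + mset_set (A' i - A i))"
    by (intro sum.cong) auto
  then show ?thesis by (simp add: sum.distrib)
qed

lemma size_filter_ne: "size {#x \<in># M. x \<noteq> p#} + count M p = size M"
proof -
  have "M = {#x \<in># M. x \<noteq> p#} + {#x \<in># M. \<not> x \<noteq> p#}" by (rule multiset_partition)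
  also have "{#x \<in># M. \<not> x \<noteq> p#} = {#x \<in># M. x = p#}" by simp
  also have "\<dots> = replicate_mset (count M p) p" by (rule filter_eq_replicate_mset)
  finally have "size M = size {#x \<in># M. x \<noteq> p#} + size (replicate_mset (count M p) p)"
    by (metis size_union)
  then show ?thesis by simp
qed

lemma card_diff_ge1: "finite X \<Longrightarrow> 2 \<le> card X \<Longrightarrow> 1 \<le> card (X - {p})"
  by (simp add: card_Diff_singleton_if) linarith

lemma nec:
  assumes dec: "strong_path_decomp k A (complete_multi lam n)"
    and ext: "strongly_extendible 2 (complete_multi lam n) k A (complete_multi mu n)"
  shows "2 * card (S 0 k A) + card (S 1 k A) \<le> (mu - lam) * card (pairs n)"
    and "u < n \<Longrightarrow> v < n \<Longrightarrow> u \<noteq> v \<Longrightarrow>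
         card (S 0 k A) + card (S1uv u v k A) + (mu - lam) \<le> (mu - lam) * card (pairs n)"
proof -
  obtain F A' where F: "F \<subseteq># complete_multi mu n - complete_multi lam n"
    and dec': "strong_path_decomp k A' (complete_multi lam n + F)"
    and sub: "\<forall>i<k. A i \<subseteq> A' i \<and> 2 \<le> card (A' i)"
    using ext unfolding strongly_extendible_def by blast
  have FS: "F \<subseteq># complete_multi (mu - lam) n" using F by (simp add: diff_complete)
  have finA': "\<forall>i<k. finite (A' i)" using dec' unfolding strong_path_decomp_def linear_forest_def by auto
  have finA: "\<forall>i<k. finite (A i)" using decomp_facts[OF dec] by auto
  have "complete_multi lam n + F = complete_multi lam n + (\<Sum>i<k. mset_set (A' i - A i))"
    using split_decomp[of k A' A] finA' sub dec dec' unfolding strong_path_decomp_def by auto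
  then have Feq: "F = (\<Sum>i<k. mset_set (A' i - A i))" by simp
  define D where "D i = card (A' i - A i)" for i
  have sizeF: "size F = (\<Sum>i<k. D i)" unfolding Feq D_def size_sum_set by simp
  have S0: "i < k \<and> A i = {}" if "i \<in> S 0 k A" for i using that finA by (auto simp: S_def)
  have S1: "i < k \<and> card (A i) = 1" if "i \<in> S 1 k A" for i using that by (auto simp: S_def)
  have finS: "finite (S j k A)" for j by (rule finite_subset[of _ "{..<k}"]) (auto simp: S_def)
  have dis: "S 0 k A \<inter> S 1 k A = {}" by (auto simp: S_def)
  have "2 * card (S 0 k A) + card (S 1 k A) \<le> sum D (S 0 k A) + sum D (S 1 k A)"
  proof -
    have "card (S 0 k A) * 2 \<le> sum D (S 0 k A)"
      using sum_bounded_below[of "S 0 k A" 2 D] S0 sub by (force simp: D_def)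
    moreover have "card (S 1 k A) * 1 \<le> sum D (S 1 k A)"
    proof -
      have "1 \<le> D i" if "i \<in> S 1 k A" for i
      proof -
        have "card (A' i - A i) = card (A' i) - card (A i)"
          using S1[OF that] sub finA finA' by (intro card_Diff_subset) (auto intro: finite_subset)
        then show ?thesis using S1[OF that] sub by (auto simp: D_def)
      qed
      then show ?thesis using sum_bounded_below[of "S 1 k A" 1 D] by simp
    qed
    ultimately show ?thesis by simp
  qed
  also have "\<dots> = sum D (S 0 k A \<union> S 1 k A)" using dis finS by (simp add: sum.union_disjoint)
  also have "\<dots> \<le> sum D {..<k}" by (intro sum_mono2) (auto simp: S_def)
  also have "\<dots> = size F" by (simp add: sizeF)
  also have "\<dots> \<le> size (complete_multi (mu - lam) n)" using FS by (rule size_mset_mono)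
  finally show "2 * card (S 0 k A) + card (S 1 k A) \<le> (mu - lam) * card (pairs n)"
    by (simp add: size_complete)
  assume uv: "u < n" "v < n" "u \<noteq> v"
  define p where "p = {u, v}"
  have pP: "p \<in> pairs n" unfolding p_def using pairs_mem uv by auto
  define D' where "D' i = card {x \<in> A' i - A i. x \<noteq> p}" for i
  have "filter_mset (\<lambda>x. x \<noteq> p) F = (\<Sum>i<k. mset_set {x \<in> A' i - A i. x \<noteq> p})"
    unfolding Feq filter_sum_set using finA' by (intro sum.cong) auto
  then have sizeF': "size (filter_mset (\<lambda>x. x \<noteq> p) F) = (\<Sum>i<k. D' i)"
    unfolding D'_def size_sum_set by simp
  have D'ge: "1 \<le> D' i" if "i < k" "A i \<subseteq> {p}" for i
  proof -
    have "{x \<in> A' i - A i. x \<noteq> p} = A' i - {p}" using that sub by auto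
    then show ?thesis unfolding D'_def using card_diff_ge1[of "A' i" p] finA' sub that by auto
  qed
  have finS1: "finite (S1uv u v k A)" by (rule finite_subset[of _ "{..<k}"]) (auto simp: S1uv_def)
  have dis2: "S 0 k A \<inter> S1uv u v k A = {}" by (auto simp: S_def S1uv_def)
  have "card (S 0 k A) + card (S1uv u v k A) \<le> sum D' (S 0 k A) + sum D' (S1uv u v k A)"
  proof -
    have "card (S 0 k A) * 1 \<le> sum D' (S 0 k A)"
      using sum_bounded_below[of "S 0 k A" 1 D'] S0 D'ge by force
    moreover have "card (S1uv u v k A) * 1 \<le> sum D' (S1uv u v k A)"
      using sum_bounded_below[of "S1uv u v k A" 1 D'] D'ge by (force simp: S1uv_def p_def)
    ultimately show ?thesis by simp
  qed
  also have "\<dots> = sum D' (S 0 k A \<union> S1uv u v k A)" using dis2 finS finS1 by (simp add: sum.union_disjoint)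
  also have "\<dots> \<le> sum D' {..<k}" by (intro sum_mono2) (auto simp: S_def S1uv_def)
  also have "\<dots> = size (filter_mset (\<lambda>x. x \<noteq> p) F)" by (simp add: sizeF')
  also have "\<dots> \<le> size (filter_mset (\<lambda>x. x \<noteq> p) (complete_multi (mu - lam) n))"
    using FS by (intro size_mset_mono multiset_filter_mono)
  finally have "card (S 0 k A) + card (S1uv u v k A) + count (complete_multi (mu - lam) n) p
      \<le> size (complete_multi (mu - lam) n)"
    using size_filter_ne[of p "complete_multi (mu - lam) n"] by linarith
  then show "card (S 0 k A) + card (S1uv u v k A) + (mu - lam) \<le> (mu - lam) * card (pairs n)"
    using pP by (simp add: size_complete count_complete)
qed


lemma suf:
  assumes dec: "strong_path_decomp k A (complete_multi lam n)"
    and B1: "2 * card (S 0 k A) + card (S 1 k A) \<le> (mu - lam) * card (pairs n)"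
    and B2: "\<forall>u<n. \<forall>v<n. u \<noteq> v \<longrightarrow>
         card (S 0 k A) + card (S1uv u v k A) + (mu - lam) \<le> (mu - lam) * card (pairs n)"
  shows "strongly_extendible 2 (complete_multi lam n) k A (complete_multi mu n)"
proof -
  define d where "d = mu - lam"
  define I0 where "I0 = S 0 k A"
  define I1 where "I1 = S 1 k A"
  define f where "f i = the_elem (A i)" for i
  define Sup where "Sup = complete_multi d n"
  have finA: "\<forall>i<k. finite (A i)" and AP: "\<forall>i<k. A i \<subseteq> pairs n"
    using decomp_facts[OF dec] by auto
  have I0: "i < k \<and> A i = {}" if "i \<in> I0" for i using that finA by (auto simp: S_def I0_def)
  have I1: "i < k \<and> A i = {f i}" if "i \<in> I1" for i
  proof -
    have "i < k" "card (A i) = 1" using that by (auto simp: S_def I1_def)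
    then obtain x where "A i = {x}" by (auto simp: card_Suc_eq)
    then show ?thesis using \<open>i < k\<close> by (simp add: f_def)
  qed
  have finI: "finite I0" "finite I1" unfolding I0_def I1_def
    by (rule finite_subset[of _ "{..<k}"], auto simp: S_def)+
  have disI: "I0 \<inter> I1 = {}" by (auto simp: I0_def I1_def S_def)
  have sizeSup: "size Sup = d * card (pairs n)" by (simp add: Sup_def size_complete)
  have cond: "\<forall>p. count Sup p + card I0 + card {i\<in>I1. f i = p} \<le> size Sup"
  proof
    fix p
    show "count Sup p + card I0 + card {i\<in>I1. f i = p} \<le> size Sup"
    proof (cases "p \<in> pairs n")
      case True
      then obtain u v where uv: "u < v" "v < n" "p = {u, v}" unfolding pairs_def by blast
      have "{i\<in>I1. f i = p} = S1uv u v k A"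
      proof
        show "{i\<in>I1. f i = p} \<subseteq> S1uv u v k A" using I1 uv by (auto simp: S1uv_def)
        show "S1uv u v k A \<subseteq> {i\<in>I1. f i = p}"
          using uv by (auto simp: S1uv_def I1_def S_def f_def)
      qed
      moreover have "card (S 0 k A) + card (S1uv u v k A) + d \<le> d * card (pairs n)"
        using B2 uv unfolding d_def by auto
      moreover have "count Sup p = d" using True by (simp add: Sup_def count_complete)
      ultimately show ?thesis by (simp add: sizeSup I0_def)
    next
      case False
      have e: "{i\<in>I1. f i = p} = {}" using I1 AP False by fastforce
      have c0: "card {i\<in>I1. f i = p} = 0" by (simp only: e card.empty)
      have "count Sup p = 0" using False by (simp add: Sup_def count_complete)
      then show ?thesis using B1 c0 sizeSup unfolding I0_def d_def by linarith
    qed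
  qed
  have "2 * card I0 + card I1 \<le> size Sup" using B1 by (simp add: sizeSup I0_def I1_def d_def)
  from alloc2[OF finI disI this cond] obtain B where
    B: "\<forall>i\<in>I0. card (B i) = 2" "\<forall>i\<in>I1. \<exists>x. B i = {x} \<and> x \<noteq> f i"
       "(\<Sum>i\<in>I0 \<union> I1. mset_set (B i)) \<subseteq># Sup" by blast
  have finB: "finite (B i)" if "i \<in> I0 \<union> I1" for i
  proof (cases "i \<in> I0")
    case True
    then have "card (B i) = 2" by (rule bspec[OF B(1)])
    then show ?thesis by (intro card_ge_0_finite) simp
  next
    case False
    then have "i \<in> I1" using that by blast
    have ex: "\<exists>x. B i = {x} \<and> x \<noteq> f i" by (rule bspec[OF B(2) \<open>i \<in> I1\<close>])
    then obtain x where x0: "B i = {x} \<and> x \<noteq> f i" by (rule exE)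
    then have "B i = {x}" by simp
    then show ?thesis by simp
  qed
  have BP: "B i \<subseteq> pairs n" if "i \<in> I0 \<union> I1" for i
  proof
    fix x assume x: "x \<in> B i"
    have "count (mset_set (B i)) x \<le> (\<Sum>j\<in>I0 \<union> I1. count (mset_set (B j)) x)"
      using that finI by (intro member_le_sum) auto
    also have "\<dots> = count (\<Sum>j\<in>I0 \<union> I1. mset_set (B j)) x" by (simp add: count_sum)
    also have "\<dots> \<le> count Sup x" using B(3) by (rule mset_subset_eq_count)
    finally have "0 < count Sup x" using x finB[OF that] by simp
    then show "x \<in> pairs n" by (simp add: Sup_def count_complete split: if_splits)
  qed
  define U where "U = I0 \<union> I1"
  define A' where "A' i = (if i \<in> U then A i \<union> B i else A i)" for i
  define F where "F = (\<Sum>i\<in>U. mset_set (B i))"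
  have US: "U \<subseteq> {..<k}" using I0 I1 by (auto simp: U_def)
  have A'I0: "A' i = B i" if "i \<in> I0" for i using I0[OF that] that by (simp add: A'_def U_def)
  have A'I1: "\<exists>x. A' i = {f i, x} \<and> x \<noteq> f i \<and> B i = {x}" if "i \<in> I1" for i
  proof -
    have ex: "\<exists>x. B i = {x} \<and> x \<noteq> f i" by (rule bspec[OF B(2) that])
    then obtain x where x0: "B i = {x} \<and> x \<noteq> f i" by (rule exE)
    then have x: "B i = {x}" "x \<noteq> f i" by simp_all
    have "i \<in> U" using that by (simp add: U_def)
    then have "A' i = A i \<union> B i" by (simp add: A'_def)
    also have "\<dots> = {f i, x}" using I1[OF that] x by auto
    finally show ?thesis using x by blast
  qed
  have lf: "linear_forest (A' i) \<and> A i \<subseteq> A' i \<and> 2 \<le> card (A' i)" if "i < k" for i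
  proof (cases "i \<in> U")
    case True
    then consider "i \<in> I0" | "i \<in> I1" by (auto simp: U_def)
    then show ?thesis
    proof cases
      case 1
      have a: "A' i = B i" "card (B i) = 2" "finite (B i)" "B i \<subseteq> pairs n"
        using A'I0[OF 1] B(1) finB[of i] BP[of i] 1 by (auto simp: U_def)
      have "\<forall>e\<in>B i. \<exists>u v. u \<noteq> v \<and> e = {u, v}" using a(4) pairs_edge by blast
      then have "linear_forest (B i)" using a by (intro linear_forest_small) auto
      then show ?thesis using a I0[OF 1] by simp
    next
      case 2
      obtain x where x0: "A' i = {f i, x} \<and> x \<noteq> f i \<and> B i = {x}" using A'I1[OF 2] by (rule exE)
      then have x: "A' i = {f i, x}" "x \<noteq> f i" "B i = {x}" by simp_all
      have "f i \<in> pairs n" "x \<in> pairs n" using I1[OF 2] AP BP[of i] 2 x by (auto simp: U_def)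
      then have "\<forall>e\<in>{f i, x}. \<exists>u v. u \<noteq> v \<and> e = {u, v}" using pairs_edge by blast
      then have "linear_forest {f i, x}" by (intro linear_forest_small) (auto simp: card_insert_if)
      then show ?thesis using x I1[OF 2] by simp
    qed
  next
    case False
    then have "A' i = A i" by (simp add: A'_def)
    moreover have "i \<notin> S 0 k A" "i \<notin> S 1 k A" using False by (auto simp: U_def I0_def I1_def)
    moreover have "linear_forest (A i)" using dec that unfolding strong_path_decomp_def by blast
    moreover have "card (A i) \<noteq> 0" "card (A i) \<noteq> 1" using calculation(2,3) that by (auto simp: S_def)
    ultimately show ?thesis by simp
  qed
  have finA': "\<forall>i<k. finite (A' i)" using lf unfolding linear_forest_def by auto
  have diffeq: "mset_set (A' i - A i) = (if i \<in> U then mset_set (B i) else {#})" if "i < k" for i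
  proof (cases "i \<in> U")
    case True
    then consider "i \<in> I0" | "i \<in> I1" by (auto simp: U_def)
    then show ?thesis
    proof cases
      case 1 then show ?thesis using A'I0[OF 1] I0[OF 1] True by simp
    next
      case 2
      obtain x where x0: "A' i = {f i, x} \<and> x \<noteq> f i \<and> B i = {x}" using A'I1[OF 2] by (rule exE)
      then have x: "A' i = {f i, x}" "x \<noteq> f i" "B i = {x}" by simp_all
      then have "A' i - A i = B i" using I1[OF 2] by auto
      then show ?thesis using True by simp
    qed
  qed (simp add: A'_def)
  have "(\<Sum>i<k. mset_set (A' i - A i)) = (\<Sum>i<k. if i \<in> U then mset_set (B i) else {#})"
    using diffeq by (intro sum.cong) auto
  also have "\<dots> = (\<Sum>i\<in>{..<k} \<inter> U. mset_set (B i))" by (simp add: sum.inter_restrict)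
  also have "{..<k} \<inter> U = U" using US by auto
  finally have sumdiff: "(\<Sum>i<k. mset_set (A' i - A i)) = F" by (simp add: F_def)
  have "(\<Sum>i<k. mset_set (A' i)) = complete_multi lam n + F"
    using split_decomp[of k A' A] finA' lf dec sumdiff unfolding strong_path_decomp_def by auto
  then have "strong_path_decomp k A' (complete_multi lam n + F)"
    unfolding strong_path_decomp_def using lf by auto
  moreover have "F \<subseteq># complete_multi mu n - complete_multi lam n"
    using B(3) by (simp add: diff_complete F_def U_def Sup_def d_def)
  ultimately show ?thesis unfolding strongly_extendible_def using lf by blast
qed


theorem proposition2:
  fixes n lam mu k :: nat and A :: "nat \<Rightarrow> nat set set"
  assumes "0 < n" "0 < lam" "0 < mu" "lam < mu"
    and "strong_path_decomp k A (complete_multi lam n)"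
  shows "strongly_extendible 2 (complete_multi lam n) k A (complete_multi mu n) \<longleftrightarrow>
    (2 * int (card (S 0 k A)) + int (card (S 1 k A))
        \<le> int (mu - lam) * (int (n * (n - 1)) div 2)) \<and>
    (\<forall>u<n. \<forall>v<n. u \<noteq> v \<longrightarrow>
       int (card (S 0 k A)) + int (card (S1uv u v k A))
        \<le> int (mu - lam) * (int (n * (n - 1)) div 2 - 1))"
proof -
  define m where "m = card (pairs n)"
  define d where "d = mu - lam"
  have mi: "int (n * (n - 1)) div 2 = int m" unfolding m_def card_pairs by (simp add: zdiv_int)
  have c1: "(2 * int (card (S 0 k A)) + int (card (S 1 k A)) \<le> int d * int m)
      \<longleftrightarrow> 2 * card (S 0 k A) + card (S 1 k A) \<le> d * m"
    by (metis (mono_tags, lifting) of_nat_add of_nat_le_iff of_nat_mult of_nat_numeral)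
  have c2: "(int a + int b \<le> int d * (int m - 1)) \<longleftrightarrow> a + b + d \<le> d * m" for a b
  proof -
    have "int d * (int m - 1) = int (d * m) - int d" by (simp add: algebra_simps)
    then show ?thesis by linarith
  qed
  show ?thesis
    unfolding mi d_def[symmetric] c1 c2
    using nec[OF assms(5)] suf[OF assms(5)] unfolding m_def d_def by blast
qed

end
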